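(* For every $X\in\overline\Omega_{1/6}$, $$\|\nabla h(X)\|_F^2\ge\|\nabla g(X)\|_F^2+\Big(\frac23\beta^2-4\beta M_1\Big)\|X^\top X-I_p\|_F^2 .$$
   Context: $f:\mathbb{R}^{n\times p}\to\mathbb{R}$ is differentiable with $f,\nabla f$ locally Lipschitz. $\mathcal{A}(X):=\frac32I_p-\frac12X^\top X$, $g(X):=f(X\mathcal{A}(X))$, $h(X):=g(X)+\frac\beta4\|X^\top X-I_p\|_F^2$ with $\beta>0$, $G(X):=\nabla f(Y)|_{Y=X\mathcal{A}(X)}$. $\overline\Omega_r:=\{X:\|X^\top X-I_p\|_F\le r\}$; $\Omega:=\{X:\|X\|_2\le1+\frac1{12}\}$; $M_1:=\sup_{X\in\Omega}\|G(X)\|_F$. *)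

theory Defs
  imports "HOL-Analysis.Analysis"
begin

text \<open>Matrices in R^(n x p) are rendered as real^'p^'n. The norm of this type is
the Frobenius norm and the inner product is the Frobenius (trace) inner product.\<close>

definition locally_lipschitz :: "('a::metric_space \<Rightarrow> 'b::metric_space) \<Rightarrow> bool" where
  "locally_lipschitz F \<longleftrightarrow>
     (\<forall>x. \<exists>e>0. \<exists>L. \<forall>y\<in>ball x e. \<forall>z\<in>ball x e. dist (F y) (F z) \<le> L * dist y z)"

definition grad :: "('a::real_inner \<Rightarrow> real) \<Rightarrow> 'a \<Rightarrow> 'a" where
  "grad F X = (THE v. (F has_derivative (\<lambda>H. v \<bullet> H)) (at X))"

definition Amap :: "real^'p^'n \<Rightarrow> real^'p^'p" where
  "Amap X = (3/2) *\<^sub>R mat 1 - (1/2) *\<^sub>R (transpose X ** X)"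

definition gfun :: "(real^'p^'n \<Rightarrow> real) \<Rightarrow> real^'p^'n \<Rightarrow> real" where
  "gfun f X = f (X ** Amap X)"

definition hfun :: "(real^'p^'n \<Rightarrow> real) \<Rightarrow> real \<Rightarrow> real^'p^'n \<Rightarrow> real" where
  "hfun f \<beta> X = gfun f X + (\<beta> / 4) * (norm (transpose X ** X - mat 1))\<^sup>2"

definition Gfun :: "(real^'p^'n \<Rightarrow> real) \<Rightarrow> real^'p^'n \<Rightarrow> real^'p^'n" where
  "Gfun f X = grad f (X ** Amap X)"

definition OmegaBar :: "real \<Rightarrow> (real^'p^'n) set" where
  "OmegaBar r = {X. norm (transpose X ** X - mat 1) \<le> r}"

text \<open>Spectral norm as the operator norm of v \<mapsto> X v.\<close>
definition Omega :: "(real^'p^'n) set" where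
  "Omega = {X. onorm (\<lambda>v. X *v v) \<le> 1 + 1/12}"

definition M1 :: "(real^'p^'n \<Rightarrow> real) \<Rightarrow> real" where
  "M1 f = (SUP X\<in>(Omega :: (real^'p^'n) set). norm (Gfun f X))"

end

theory Submission
  imports Defs
begin

lemma mm_inner1:
  fixes A :: "real^'k^'n" and B :: "real^'p^'k" and C :: "real^'p^'n"
  shows "(A ** B) \<bullet> C = B \<bullet> (transpose A ** C)"
proof -
  have "(A ** B) \<bullet> C = (\<Sum>i\<in>UNIV. \<Sum>j\<in>UNIV. \<Sum>k\<in>UNIV. A$i$k * B$k$j * C$i$j)"
    unfolding inner_vec_def matrix_matrix_mult_def
    by (simp add: sum_distrib_right)
  also have "\<dots> = (\<Sum>i\<in>UNIV. \<Sum>k\<in>UNIV. \<Sum>j\<in>UNIV. A$i$k * B$k$j * C$i$j)"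
    by (rule sum.cong, rule refl, rule sum.swap)
  also have "\<dots> = (\<Sum>k\<in>UNIV. \<Sum>i\<in>UNIV. \<Sum>j\<in>UNIV. A$i$k * B$k$j * C$i$j)"
    by (rule sum.swap)
  also have "\<dots> = (\<Sum>k\<in>UNIV. \<Sum>j\<in>UNIV. \<Sum>i\<in>UNIV. A$i$k * B$k$j * C$i$j)"
    by (rule sum.cong, rule refl, rule sum.swap)
  also have "\<dots> = B \<bullet> (transpose A ** C)"
    unfolding inner_vec_def matrix_matrix_mult_def transpose_def
    by (simp add: sum_distrib_left mult_ac)
  finally show ?thesis .
qed
lemma mm_inner2:
  fixes A :: "real^'k^'n" and B :: "real^'p^'k" and C :: "real^'p^'n"
  shows "(A ** B) \<bullet> C = A \<bullet> (C ** transpose B)"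
proof -
  have "(A ** B) \<bullet> C = (\<Sum>i\<in>UNIV. \<Sum>j\<in>UNIV. \<Sum>k\<in>UNIV. A$i$k * B$k$j * C$i$j)"
    unfolding inner_vec_def matrix_matrix_mult_def
    by (simp add: sum_distrib_right)
  also have "\<dots> = (\<Sum>i\<in>UNIV. \<Sum>k\<in>UNIV. \<Sum>j\<in>UNIV. A$i$k * B$k$j * C$i$j)"
    by (rule sum.cong, rule refl, rule sum.swap)
  also have "\<dots> = A \<bullet> (C ** transpose B)"
    unfolding inner_vec_def matrix_matrix_mult_def transpose_def
    by (simp add: sum_distrib_left mult_ac)
  finally show ?thesis .
qed

lemma transpose_inner:
  fixes A B :: "real^'p^'n"
  shows "transpose A \<bullet> transpose B = A \<bullet> B"
  by (simp add: inner_vec_def transpose_def sum.swap[of _ "UNIV::'p set"])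

lemma transpose_add: "transpose (A + B) = transpose A + (transpose B :: real^'n^'p)"
  by (simp add: transpose_def vec_eq_iff)
lemma transpose_diff: "transpose (A - B) = transpose A - (transpose B :: real^'n^'p)"
  by (simp add: transpose_def vec_eq_iff)

lemma mm_bilinear: "bilinear (\<lambda>(A::real^'k^'n) (B::real^'p^'k). A ** B)"
  unfolding bilinear_def
  by (auto intro!: linearI simp: matrix_add_ldistrib matrix_matrix_mult_def vec_eq_iff
      sum.distrib algebra_simps sum_distrib_left)

lemma normsq_mat: "(norm (M::real^'p^'n))\<^sup>2 = (\<Sum>i\<in>UNIV. \<Sum>j\<in>UNIV. (M$i$j)\<^sup>2)"
  unfolding power2_norm_eq_inner by (simp add: inner_vec_def power2_eq_square)

lemma normsq_vec: "(norm (v::real^'n))\<^sup>2 = (\<Sum>i\<in>UNIV. (v$i)\<^sup>2)"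
  unfolding power2_norm_eq_inner by (simp add: inner_vec_def power2_eq_square)

lemma norm_mm_le:
  fixes A :: "real^'k^'n" and B :: "real^'p^'k"
  shows "norm (A ** B) \<le> norm A * norm B"
proof -
  have "(norm (A ** B))\<^sup>2 = (\<Sum>i\<in>UNIV. \<Sum>j\<in>UNIV. (\<Sum>k\<in>UNIV. A$i$k * B$k$j)\<^sup>2)"
    by (simp add: normsq_mat matrix_matrix_mult_def)
  also have "\<dots> \<le> (\<Sum>i\<in>UNIV. \<Sum>j\<in>UNIV. (\<Sum>k\<in>UNIV. (A$i$k)\<^sup>2) * (\<Sum>k\<in>UNIV. (B$k$j)\<^sup>2))"
    by (intro sum_mono Cauchy_Schwarz_ineq_sum)
  also have "\<dots> = (\<Sum>i\<in>UNIV. \<Sum>k\<in>UNIV. (A$i$k)\<^sup>2) * (\<Sum>j\<in>UNIV. \<Sum>k\<in>UNIV. (B$k$j)\<^sup>2)"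
    by (rule sum_product[symmetric])
  also have "\<dots> = (norm A * norm B)\<^sup>2"
    by (simp add: normsq_mat power_mult_distrib sum.swap[of _ "UNIV::'p set"])
  finally show ?thesis
    by (meson norm_ge_zero power2_le_imp_le zero_le_mult_iff)
qed

lemma norm_mv_le:
  fixes A :: "real^'k^'n" and v :: "real^'k"
  shows "norm (A *v v) \<le> norm A * norm v"
proof -
  have "(norm (A *v v))\<^sup>2 = (\<Sum>i\<in>UNIV. (\<Sum>k\<in>UNIV. A$i$k * v$k)\<^sup>2)"
    by (simp add: normsq_vec matrix_vector_mult_def)
  also have "\<dots> \<le> (\<Sum>i\<in>UNIV. (\<Sum>k\<in>UNIV. (A$i$k)\<^sup>2) * (\<Sum>k\<in>UNIV. (v$k)\<^sup>2))"
    by (intro sum_mono Cauchy_Schwarz_ineq_sum)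
  also have "\<dots> = (norm A * norm v)\<^sup>2"
    by (simp add: normsq_mat normsq_vec power_mult_distrib sum_distrib_right)
  finally show ?thesis
    by (meson norm_ge_zero power2_le_imp_le zero_le_mult_iff)
qed

lemma mm_bounded_bilinear: "bounded_bilinear (\<lambda>(A::real^'k^'n) (B::real^'p^'k). A ** B)"
proof -
  have b: "bilinear (\<lambda>(A::real^'k^'n) (B::real^'p^'k). A ** B)" by (rule mm_bilinear)
  show ?thesis
  proof
    fix a a' :: "real^'k^'n" and b b' :: "real^'p^'k" and r :: real
    show "(a + a') ** b = a ** b + a' ** b" using bilinear_ladd[OF b] by simp
    show "a ** (b + b') = a ** b + a ** b'" using bilinear_radd[OF b] by simp
    show "(r *\<^sub>R a) ** b = r *\<^sub>R (a ** b)" using bilinear_lmul[OF b] by simp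
    show "a ** (r *\<^sub>R b) = r *\<^sub>R (a ** b)" using bilinear_rmul[OF b] by simp
  next
    show "\<exists>K. \<forall>(a::real^'k^'n) (b::real^'p^'k). norm (a ** b) \<le> norm a * norm b * K"
      by (metis mult.right_neutral norm_mm_le)
  qed
qed

lemma grad_eq:
  fixes F :: "'a::euclidean_space \<Rightarrow> real"
  assumes d: "(F has_derivative (\<lambda>H. v \<bullet> H)) (at x)"
  shows "grad F x = v"
  unfolding grad_def
proof (rule the_equality)
  show "(F has_derivative (\<lambda>H. v \<bullet> H)) (at x)" by (rule d)
next
  fix w assume "(F has_derivative (\<lambda>H. w \<bullet> H)) (at x)"
  then have "(\<lambda>H. w \<bullet> H) = (\<lambda>H. v \<bullet> H)" using d by (rule has_derivative_unique)
  then have "w \<bullet> (w - v) = v \<bullet> (w - v)" by metis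
  then have "(w - v) \<bullet> (w - v) = 0" by (simp add: inner_diff_left)
  then show "w = v" by simp
qed

lemma grad_works:
  fixes F :: "'a::euclidean_space \<Rightarrow> real"
  assumes d: "(F has_derivative F') (at x)"
  shows "(F has_derivative (\<lambda>H. grad F x \<bullet> H)) (at x)" and "\<And>H. F' H = grad F x \<bullet> H"
proof -
  have lin: "linear F'" using d by (rule has_derivative_linear)
  define v where "v = (\<Sum>b\<in>Basis. F' b *\<^sub>R b)"
  have eq: "F' H = v \<bullet> H" for H
  proof -
    have "F' H = F' (\<Sum>b\<in>Basis. (H \<bullet> b) *\<^sub>R b)" by (simp add: euclidean_representation)
    also have "\<dots> = (\<Sum>b\<in>Basis. (H \<bullet> b) * F' b)"
      by (simp add: linear_sum[OF lin] linear_scale[OF lin])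
    also have "\<dots> = v \<bullet> H" unfolding v_def inner_sum_left by (rule sum.cong) (simp_all add: inner_commute)
    finally show ?thesis .
  qed
  have "F' = (\<lambda>H. v \<bullet> H)" using eq by auto
  then have dv: "(F has_derivative (\<lambda>H. v \<bullet> H)) (at x)" using d by simp
  have g: "grad F x = v" using dv by (rule grad_eq)
  show "(F has_derivative (\<lambda>H. grad F x \<bullet> H)) (at x)" using dv g by simp
  show "\<And>H. F' H = grad F x \<bullet> H" using eq g by simp
qed

lemma transpose_bl: "bounded_linear (transpose :: real^'p^'n \<Rightarrow> real^'n^'p)"
proof -
  have "linear (transpose :: real^'p^'n \<Rightarrow> real^'n^'p)"
    by (rule linearI) (simp_all add: transpose_add transpose_scalar)
  then show ?thesis using linear_conv_bounded_linear by blast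
qed

lemma dS: "((\<lambda>X::real^'p^'n. transpose X ** X) has_derivative
           (\<lambda>H. transpose X ** H + transpose H ** X)) (at X)"
  by (rule bounded_bilinear.FDERIV[OF mm_bounded_bilinear
      bounded_linear.has_derivative[OF transpose_bl has_derivative_ident] has_derivative_ident])

lemma dY: "((\<lambda>X::real^'p^'n. X ** Amap X) has_derivative
           (\<lambda>H. X ** ((-(1/2)) *\<^sub>R (transpose X ** H + transpose H ** X)) + H ** Amap X)) (at X)"
proof -
  have dA: "(Amap has_derivative (\<lambda>H. (-(1/2)) *\<^sub>R (transpose X ** H + transpose H ** X))) (at X)"
    unfolding Amap_def[abs_def]
    by (rule has_derivative_eq_rhs, (rule derivative_intros dS)+) simp
  show ?thesis
    using bounded_bilinear.FDERIV[OF mm_bounded_bilinear has_derivative_ident dA]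
    by simp
qed

lemma dP: "((\<lambda>X::real^'p^'n. (\<beta>/4) * (norm (transpose X ** X - mat 1))\<^sup>2) has_derivative
           (\<lambda>H. (\<beta> *\<^sub>R (X ** (transpose X ** X - mat 1))) \<bullet> H)) (at X)"
proof -
  define D where "D = transpose X ** X - mat 1"
  have DT: "transpose D = D" by (simp add: D_def transpose_diff matrix_transpose_mul)
  have dD: "((\<lambda>X::real^'p^'n. transpose X ** X - mat 1) has_derivative
           (\<lambda>H. transpose X ** H + transpose H ** X)) (at X)"
    by (rule has_derivative_eq_rhs, (rule derivative_intros dS)+) simp
  have dq: "((\<lambda>X::real^'p^'n. (transpose X ** X - mat 1) \<bullet> (transpose X ** X - mat 1)) has_derivative
           (\<lambda>H. D \<bullet> (transpose X ** H + transpose H ** X) + (transpose X ** H + transpose H ** X) \<bullet> D)) (at X)"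
    using bounded_bilinear.FDERIV[OF bounded_bilinear_inner dD dD] by (simp add: D_def)
  have key: "D \<bullet> (transpose X ** H + transpose H ** X) + (transpose X ** H + transpose H ** X) \<bullet> D
        = 4 * ((X ** D) \<bullet> H)" for H :: "real^'p^'n"
  proof -
    have "(transpose X ** H) \<bullet> D = H \<bullet> (X ** D)"
      by (simp add: mm_inner1)
    then have 1: "(transpose X ** H) \<bullet> D = (X ** D) \<bullet> H"
      by (simp add: inner_commute)
    have 2: "(transpose H ** X) \<bullet> D = (X ** D) \<bullet> H"
    proof -
      have "(transpose H ** X) \<bullet> D = transpose H \<bullet> (D ** transpose X)" by (rule mm_inner2)
      also have "D ** transpose X = transpose (X ** D)" by (simp add: matrix_transpose_mul DT)
      finally show ?thesis by (simp add: transpose_inner inner_commute)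
    qed
    show ?thesis using 1 2 by (simp add: inner_add_left inner_add_right inner_commute)
  qed
  have "((\<lambda>X::real^'p^'n. (\<beta>/4) * ((transpose X ** X - mat 1) \<bullet> (transpose X ** X - mat 1))) has_derivative
           (\<lambda>H. (\<beta>/4) * (D \<bullet> (transpose X ** H + transpose H ** X) + (transpose X ** H + transpose H ** X) \<bullet> D))) (at X)"
    by (rule has_derivative_mult_right[OF dq])
  then show ?thesis unfolding key by (simp add: D_def[symmetric] power2_norm_eq_inner)
qed

lemma mm_ladd: "((A::real^'k^'n) + B) ** (C::real^'p^'k) = A ** C + B ** C"
  by (simp add: matrix_matrix_mult_def vec_eq_iff sum.distrib algebra_simps)
lemma mm_ldiff: "((A::real^'k^'n) - B) ** (C::real^'p^'k) = A ** C - B ** C"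
  by (simp add: matrix_matrix_mult_def vec_eq_iff sum_subtractf algebra_simps)
lemma mm_radd: "(A::real^'k^'n) ** ((B::real^'p^'k) + C) = A ** B + A ** C"
  by (simp add: matrix_matrix_mult_def vec_eq_iff sum.distrib algebra_simps)
lemma mm_rdiff: "(A::real^'k^'n) ** ((B::real^'p^'k) - C) = A ** B - A ** C"
  by (simp add: matrix_matrix_mult_def vec_eq_iff sum_subtractf algebra_simps)
lemma mm_lscale: "(c *\<^sub>R (A::real^'k^'n)) ** (B::real^'p^'k) = c *\<^sub>R (A ** B)"
  by (simp add: matrix_matrix_mult_def vec_eq_iff sum_distrib_left algebra_simps)
lemma mm_rscale: "(A::real^'k^'n) ** (c *\<^sub>R (B::real^'p^'k)) = c *\<^sub>R (A ** B)"
  by (simp add: matrix_matrix_mult_def vec_eq_iff sum_distrib_left algebra_simps)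

lemma ll_isCont:
  assumes "locally_lipschitz F"
  shows "isCont F x"
proof -
  obtain e L where e: "e > 0" and L: "\<forall>y\<in>ball x e. \<forall>z\<in>ball x e. dist (F y) (F z) \<le> L * dist y z"
    using assms unfolding locally_lipschitz_def by blast
  have "lipschitz_on (max L 0) (ball x e) F"
    unfolding lipschitz_on_def
  proof (intro conjI ballI)
    fix y z assume "y \<in> ball x e" "z \<in> ball x e"
    then have "dist (F y) (F z) \<le> L * dist y z" using L by blast
    also have "\<dots> \<le> max L 0 * dist y z" by (intro mult_right_mono) auto
    finally show "dist (F y) (F z) \<le> max L 0 * dist y z" .
  qed simp
  then have "continuous_on (ball x e) F" by (rule lipschitz_on_continuous_on)
  then show ?thesis using e by (simp add: continuous_on_eq_continuous_at)
qed

lemma Omega_bound: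
  assumes "(X::real^'p::finite^'n::finite) \<in> Omega"
  shows "norm X \<le> sqrt (2 * real CARD('n) * real CARD('p))"
proof -
  have on: "onorm (\<lambda>v. X *v v) \<le> 1 + 1/12" using assms by (simp add: Omega_def)
  have comp: "\<bar>X$i$j\<bar> \<le> 13/12" for i j
  proof -
    have "\<bar>X$i$j\<bar> = \<bar>(X *v axis j 1)$i\<bar>"
      by (simp add: matrix_vector_mult_basis column_def)
    also have "\<dots> \<le> norm (X *v axis j 1)" by (rule component_le_norm_cart)
    also have "\<dots> \<le> onorm (\<lambda>v. X *v v) * norm (axis j (1::real))"
      by (rule onorm) simp
    also have "\<dots> \<le> 13/12" using on by simp
    finally show ?thesis .
  qed
  have "(norm X)\<^sup>2 = (\<Sum>i\<in>UNIV. \<Sum>j\<in>UNIV. (X$i$j)\<^sup>2)" by (rule normsq_mat)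
  also have "\<dots> \<le> (\<Sum>i\<in>(UNIV::'n set). \<Sum>j\<in>(UNIV::'p set). 2)"
  proof (intro sum_mono)
    fix i j
    have "(X$i$j)\<^sup>2 = \<bar>X$i$j\<bar>\<^sup>2" by simp
    also have "\<dots> \<le> (13/12)\<^sup>2" by (rule power_mono[OF comp]) simp
    finally show "(X$i$j)\<^sup>2 \<le> 2" by (simp add: power2_eq_square)
  qed
  also have "\<dots> = 2 * real CARD('n) * real CARD('p)" by simp
  finally show ?thesis by (simp add: real_le_rsqrt)
qed

lemma Omega_bdd:
  fixes f :: "real^'p::finite^'n::finite \<Rightarrow> real"
  assumes gl: "locally_lipschitz (grad f)"
  shows "bdd_above ((\<lambda>X. norm (Gfun f X)) ` (Omega :: (real^'p^'n) set))"
proof -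
  define R where "R = sqrt (2 * real CARD('n) * real CARD('p))"
  have cY: "continuous_on UNIV (\<lambda>X::real^'p^'n. X ** Amap X)"
    by (intro continuous_at_imp_continuous_on ballI has_derivative_continuous[OF dY])
  have cg: "continuous_on UNIV (grad f)"
    by (intro continuous_at_imp_continuous_on ballI ll_isCont[OF gl])
  have cG: "continuous_on UNIV (Gfun f :: real^'p^'n \<Rightarrow> real^'p^'n)"
    unfolding Gfun_def[abs_def]
    using continuous_on_compose2[OF cg cY] by simp
  have "compact (Gfun f ` cball (0::real^'p^'n) R)"
    by (rule compact_continuous_image[OF continuous_on_subset[OF cG] compact_cball]) simp
  then obtain B where B: "\<forall>y\<in>Gfun f ` cball (0::real^'p^'n) R. norm y \<le> B"
    using compact_imp_bounded bounded_iff by metis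
  show ?thesis
  proof (rule bdd_aboveI2)
    fix X :: "real^'p^'n" assume "X \<in> Omega"
    then have "X \<in> cball 0 R" using Omega_bound R_def by (simp add: dist_norm)
    then show "norm (Gfun f X) \<le> B" using B by blast
  qed
qed

lemma in_Omega:
  fixes X :: "real^'p::finite^'n::finite"
  assumes "norm (transpose X ** X - mat 1) \<le> 1/6"
  shows "X \<in> Omega"
proof -
  define D where "D = transpose X ** X - mat 1"
  have "norm (X *v v) \<le> (1 + 1/12) * norm v" for v
  proof -
    have "(norm (X *v v))\<^sup>2 = (X *v v) \<bullet> (X *v v)" by (rule power2_norm_eq_inner)
    also have "\<dots> = (v v* transpose X) \<bullet> (X *v v)" by simp
    also have "\<dots> = v \<bullet> (transpose X *v (X *v v))" by (rule dot_lmul_matrix)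
    also have "\<dots> = v \<bullet> ((D + mat 1) *v v)" by (simp add: matrix_vector_mul_assoc D_def)
    also have "\<dots> = v \<bullet> v + v \<bullet> (D *v v)" by (simp add: matrix_vector_mult_add_rdistrib inner_add_right)
    also have "\<dots> \<le> (norm v)\<^sup>2 + norm v * (norm D * norm v)"
    proof -
      have "v \<bullet> (D *v v) \<le> norm v * norm (D *v v)" by (rule norm_cauchy_schwarz)
      also have "\<dots> \<le> norm v * (norm D * norm v)" by (intro mult_left_mono norm_mv_le) simp
      finally show ?thesis by (simp add: power2_norm_eq_inner)
    qed
    also have "\<dots> \<le> (norm v)\<^sup>2 + norm v * ((1/6) * norm v)"
      using assms D_def by (intro add_left_mono mult_left_mono mult_right_mono) auto
    also have "\<dots> \<le> ((1 + 1/12) * norm v)\<^sup>2" by (simp add: power2_eq_square)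
    finally show ?thesis by (rule power2_le_imp_le) simp
  qed
  then have "onorm (\<lambda>v. X *v v) \<le> 1 + 1/12" by (rule onorm_le)
  then show ?thesis by (simp add: Omega_def)
qed

theorem mainTheorem16:
  fixes f :: "real^'p::finite^'n::finite \<Rightarrow> real"
    and \<beta> :: real and X :: "real^'p^'n"
  assumes f_diff: "\<And>Y. f differentiable (at Y)"
    and f_lip: "locally_lipschitz f"
    and gradf_lip: "locally_lipschitz (grad f)"
    and beta_pos: "\<beta> > 0"
    and X_in: "X \<in> OmegaBar (1/6)"
  shows "(norm (grad (hfun f \<beta>) X))\<^sup>2 \<ge> (norm (grad (gfun f) X))\<^sup>2
           + ((2/3) * \<beta>\<^sup>2 - 4 * \<beta> * M1 f) * (norm (transpose X ** X - mat 1))\<^sup>2"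
proof -
  define D where "D = transpose X ** X - mat 1"
  define G where "G = Gfun f X"
  define vg where "vg = grad (gfun f) X"
  define dYX where "dYX = (\<lambda>H::real^'p^'n. X ** ((-(1/2)) *\<^sub>R (transpose X ** H + transpose H ** X)) + H ** Amap X)"
  have nD: "norm D \<le> 1/6" using X_in by (simp add: OmegaBar_def D_def)
  have S: "transpose X ** X = D + mat 1" by (simp add: D_def)
  have DT: "transpose D = D" by (simp add: D_def transpose_diff matrix_transpose_mul)
  have fd: "(f has_derivative (\<lambda>K. grad f Y \<bullet> K)) (at Y)" for Y
    using f_diff[of Y] unfolding differentiable_def by (metis grad_works(1))
  have gd0: "(gfun f has_derivative (\<lambda>H. G \<bullet> dYX H)) (at X)"
    unfolding gfun_def[abs_def] G_def Gfun_def dYX_def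
    by (rule has_derivative_compose[OF dY fd])
  have gd: "(gfun f has_derivative (\<lambda>H. vg \<bullet> H)) (at X)"
    unfolding vg_def by (rule grad_works(1)[OF gd0])
  have gdeq: "G \<bullet> dYX H = vg \<bullet> H" for H
    unfolding vg_def by (rule grad_works(2)[OF gd0])
  have hd: "(hfun f \<beta> has_derivative (\<lambda>H. (vg + \<beta> *\<^sub>R (X ** D)) \<bullet> H)) (at X)"
    unfolding hfun_def[abs_def] D_def
    by (rule has_derivative_eq_rhs, rule has_derivative_add[OF gd dP]) (simp add: inner_add_left)
  have gh: "grad (hfun f \<beta>) X = vg + \<beta> *\<^sub>R (X ** D)" by (rule grad_eq[OF hd])
  have A: "Amap X = mat 1 - (1/2) *\<^sub>R D"
    by (simp add: Amap_def S vec_eq_iff mat_def field_simps)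
  have e1: "transpose X ** (X ** D) = D ** D + D"
    by (simp add: matrix_mul_assoc S mm_ladd)
  have e2: "transpose (X ** D) ** X = D ** D + D"
    by (simp add: matrix_transpose_mul DT matrix_mul_assoc[symmetric] S mm_radd)
  have e3: "(X ** D) ** Amap X = X ** (D - (1/2) *\<^sub>R (D ** D))"
    by (simp add: A matrix_mul_assoc[symmetric] mm_rdiff mm_rscale)
  have "dYX (X ** D) = X ** ((-(1/2)) *\<^sub>R ((D ** D + D) + (D ** D + D)) + (D - (1/2) *\<^sub>R (D ** D)))"
    unfolding dYX_def e1 e2 e3 mm_radd[symmetric] by (rule refl)
  also have "(-(1/2)) *\<^sub>R ((D ** D + D) + (D ** D + D)) + (D - (1/2) *\<^sub>R (D ** D)) = (-(3/2)) *\<^sub>R (D ** D)"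
    by (simp add: vec_eq_iff field_simps)
  finally have dyxd: "dYX (X ** D) = (-(3/2)) *\<^sub>R (X ** (D ** D))" by (simp only: mm_rscale)
  have cross: "vg \<bullet> (X ** D) = -(3/2) * (G \<bullet> (X ** (D ** D)))"
    using gdeq[of "X ** D"] dyxd by simp
  have nDD: "norm (D ** D) \<le> norm D * norm D" by (rule norm_mm_le)
  have quad: "(X ** M) \<bullet> (X ** M) = M \<bullet> M + M \<bullet> (D ** M)" for M :: "real^'p^'p"
  proof -
    have "(X ** M) \<bullet> (X ** M) = M \<bullet> (transpose X ** (X ** M))" by (rule mm_inner1)
    also have "\<dots> = M \<bullet> (M + D ** M)" by (simp add: matrix_mul_assoc S mm_ladd add.commute)
    finally show ?thesis by (simp add: inner_add_right)
  qed
  have XD: "(norm (X ** D))\<^sup>2 \<ge> (5/6) * (norm D)\<^sup>2"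
  proof -
    have "\<bar>D \<bullet> (D ** D)\<bar> \<le> norm D * norm (D ** D)" by (rule Cauchy_Schwarz_ineq2)
    also have "\<dots> \<le> norm D * (norm D * norm D)" by (intro mult_left_mono nDD) simp
    also have "\<dots> \<le> norm D * (norm D * (1/6))" using nD by (intro mult_left_mono) simp_all
    finally have "\<bar>D \<bullet> (D ** D)\<bar> \<le> (1/6) * (norm D)\<^sup>2" by (simp add: power2_eq_square mult_ac)
    moreover have "(norm (X ** D))\<^sup>2 = (norm D)\<^sup>2 + D \<bullet> (D ** D)"
      by (simp add: power2_norm_eq_inner quad)
    ultimately show ?thesis by linarith
  qed
  have XDD: "norm (X ** (D ** D)) \<le> (4/3) * (norm D)\<^sup>2"
  proof -
    let ?M = "D ** D"
    have "\<bar>?M \<bullet> (D ** ?M)\<bar> \<le> norm ?M * norm (D ** ?M)" by (rule Cauchy_Schwarz_ineq2)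
    also have "\<dots> \<le> norm ?M * (norm D * norm ?M)" by (intro mult_left_mono norm_mm_le) simp
    also have "\<dots> \<le> norm ?M * ((1/6) * norm ?M)" using nD by (intro mult_left_mono mult_right_mono) simp_all
    finally have a: "\<bar>?M \<bullet> (D ** ?M)\<bar> \<le> (1/6) * (norm ?M)\<^sup>2" by (simp add: power2_eq_square mult_ac)
    have b: "(norm ?M)\<^sup>2 \<le> ((norm D)\<^sup>2)\<^sup>2"
      using nDD by (intro power_mono) (simp_all add: power2_eq_square)
    have "(norm (X ** ?M))\<^sup>2 = (norm ?M)\<^sup>2 + ?M \<bullet> (D ** ?M)"
      by (simp add: power2_norm_eq_inner quad)
    also have "\<dots> \<le> (7/6) * ((norm D)\<^sup>2)\<^sup>2" using a b by linarith
    also have "\<dots> \<le> ((4/3) * (norm D)\<^sup>2)\<^sup>2"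
    proof -
      have sq: "((4/3) * (t::real))\<^sup>2 = (16/9) * t\<^sup>2" for t by (simp add: power2_eq_square)
      have "0 \<le> ((norm D)\<^sup>2)\<^sup>2" by simp
      then show ?thesis unfolding sq by linarith
    qed
    finally show ?thesis by (rule power2_le_imp_le) simp
  qed
  have GM: "norm G \<le> M1 f"
  proof -
    have "X \<in> Omega" using in_Omega nD D_def by blast
    then show ?thesis unfolding G_def M1_def by (rule cSUP_upper[OF _ Omega_bdd[OF gradf_lip]])
  qed
  have cb: "\<bar>G \<bullet> (X ** (D ** D))\<bar> \<le> M1 f * ((4/3) * (norm D)\<^sup>2)"
  proof -
    have "\<bar>G \<bullet> (X ** (D ** D))\<bar> \<le> norm G * norm (X ** (D ** D))" by (rule Cauchy_Schwarz_ineq2)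
    also have "\<dots> \<le> M1 f * ((4/3) * (norm D)\<^sup>2)"
      using GM XDD by (intro mult_mono) (simp_all, meson norm_ge_zero order_trans)
    finally show ?thesis .
  qed
  have expand: "(norm (grad (hfun f \<beta>) X))\<^sup>2 = (norm vg)\<^sup>2 + 2 * \<beta> * (vg \<bullet> (X ** D)) + \<beta>\<^sup>2 * (norm (X ** D))\<^sup>2"
  proof -
    have gen: "(a + c *\<^sub>R w) \<bullet> (a + c *\<^sub>R w) = a \<bullet> a + 2 * c * (a \<bullet> w) + c\<^sup>2 * (w \<bullet> w)"
      for a w :: "real^'p^'n" and c :: real
    proof -
      have wa: "w \<bullet> a = a \<bullet> w" by (rule inner_commute)
      have "(a + c *\<^sub>R w) \<bullet> (a + c *\<^sub>R w) = a \<bullet> a + c * (a \<bullet> w) + c * (w \<bullet> a) + c * (c * (w \<bullet> w))"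
        by (simp only: inner_add_left inner_add_right inner_scaleR_left inner_scaleR_right distrib_left add_ac)
      also have "\<dots> = a \<bullet> a + 2 * c * (a \<bullet> w) + c\<^sup>2 * (w \<bullet> w)"
        unfolding wa by (simp add: power2_eq_square)
      finally show ?thesis .
    qed
    show ?thesis unfolding gh power2_norm_eq_inner by (rule gen)
  qed
  have t1: "2 * \<beta> * (vg \<bullet> (X ** D)) \<ge> - (4 * \<beta> * M1 f) * (norm D)\<^sup>2"
  proof -
    have c1: "G \<bullet> (X ** (D ** D)) \<le> M1 f * ((4/3) * (norm D)\<^sup>2)"
      using cb abs_le_D1 by blast
    have c2: "(3 * \<beta>) * (G \<bullet> (X ** (D ** D))) \<le> (3 * \<beta>) * (M1 f * ((4/3) * (norm D)\<^sup>2))"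
      using beta_pos by (intro mult_left_mono[OF c1]) simp
    have c3: "(3 * \<beta>) * (M1 f * ((4/3) * (norm D)\<^sup>2)) = (4 * \<beta> * M1 f) * (norm D)\<^sup>2"
      by simp
    have c4: "2 * \<beta> * (vg \<bullet> (X ** D)) = - ((3 * \<beta>) * (G \<bullet> (X ** (D ** D))))"
      unfolding cross by simp
    have c5: "- (4 * \<beta> * M1 f) * (norm D)\<^sup>2 = - ((4 * \<beta> * M1 f) * (norm D)\<^sup>2)" by simp
    show ?thesis unfolding c5 using c2 c3 c4 by linarith
  qed
  have t2: "\<beta>\<^sup>2 * (norm (X ** D))\<^sup>2 \<ge> (2/3) * \<beta>\<^sup>2 * (norm D)\<^sup>2"
  proof -
    have "(2/3) * \<beta>\<^sup>2 * (norm D)\<^sup>2 \<le> \<beta>\<^sup>2 * ((5/6) * (norm D)\<^sup>2)" by simp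
    also have "\<dots> \<le> \<beta>\<^sup>2 * (norm (X ** D))\<^sup>2" using XD by (intro mult_left_mono) simp_all
    finally show ?thesis .
  qed
  show ?thesis
  proof -
    have e: "((2/3) * \<beta>\<^sup>2 - 4 * \<beta> * M1 f) * (norm D)\<^sup>2
        = (2/3) * \<beta>\<^sup>2 * (norm D)\<^sup>2 + (- (4 * \<beta> * M1 f)) * (norm D)\<^sup>2"
      by (rule left_diff_distrib[THEN trans]) (simp only: mult_minus_left diff_conv_add_uminus)
    show ?thesis unfolding expand D_def[symmetric] vg_def[symmetric] e using t1 t2 by linarith
  qed
qed

end
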